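(* The size $g^*$ of the smallest grammar satisfies, for each edit type $\ast\in\{\mathrm{sub},\mathrm{ins},\mathrm{del}\}$: $\mathsf{MS}_{\ast}(g^*,n)\le 2$ and $\mathsf{AS}_{\ast}(g^*,n)\le g^*$; i.e. $g^*(T')\le 2g^*(T)$ for every string $T$ of length $n$ and every $T'$ obtained from $T$ by one edit of that type.
   Context: Strings are over an alphabet $\Sigma$; $\mathsf{ed}$ is the edit distance. $\mathsf{MS}_{\mathrm{sub}}(C,n)=\max_{T\in\Sigma^n}\{C(T')/C(T): T'\in\Sigma^n,\ \mathsf{ed}(T,T')=1\}$, with $\mathsf{MS}_{\mathrm{ins}},\mathsf{MS}_{\mathrm{del}}$ analogous for $T'$ of length $n+1$, resp. $n-1$, and $\mathsf{AS}_\ast$ analogous with $C(T')-C(T)$. A grammar compression of $T$ is a context-free grammar deriving exactly the single string $T$; its size is the total length of the right-hand sides of its productions. $g^*(T)$ is the minimum size of a grammar compression of $T$. *)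

theory Defs
  imports Main
begin

fun ed :: "'a list \<Rightarrow> 'a list \<Rightarrow> nat" where
  "ed [] ys = length ys"
| "ed xs [] = length xs"
| "ed (x # xs) (y # ys) =
     min (min (ed xs (y # ys) + 1) (ed (x # xs) ys + 1))
         (ed xs ys + (if x = y then 0 else 1))"

datatype 'a sym = NT nat | Tm 'a

type_synonym 'a grammar = "(nat \<times> 'a sym list) list"

definition cfg_step :: "'a grammar \<Rightarrow> 'a sym list \<Rightarrow> 'a sym list \<Rightarrow> bool" where
  "cfg_step P u v \<longleftrightarrow>
     (\<exists>l A r alpha. (A, alpha) \<in> set P \<and> u = l @ [NT A] @ r \<and> v = l @ alpha @ r)"

definition cfg_lang :: "'a grammar \<Rightarrow> nat \<Rightarrow> 'a list set" where
  "cfg_lang P S = {w. (cfg_step P)\<^sup>*\<^sup>* [NT S] (map Tm w)}"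

definition gsize :: "'a grammar \<Rightarrow> nat" where
  "gsize P = (\<Sum>p\<leftarrow>P. length (snd p))"

definition is_grammar_compression :: "'a grammar \<Rightarrow> nat \<Rightarrow> 'a list \<Rightarrow> bool" where
  "is_grammar_compression P S T \<longleftrightarrow> cfg_lang P S = {T}"

definition gstar :: "'a list \<Rightarrow> nat" where
  "gstar T = (LEAST k. \<exists>P S. is_grammar_compression P S T \<and> gsize P = k)"

end

theory Submission
  imports Defs
begin

lemma list_all2_mono_ind [mono]:
  "(\<And>x y. P x y \<longrightarrow> Q x y) \<Longrightarrow> list_all2 P xs ys \<longrightarrow> list_all2 Q xs ys"
  by (auto intro: list_all2_mono)

inductive gen :: "'a grammar \<Rightarrow> nat \<Rightarrow> 'a list \<Rightarrow> bool" for G where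
  "(A, \<alpha>) \<in> set G \<Longrightarrow>
   list_all2 (\<lambda>s w. (\<exists>a. s = Tm a \<and> w = [a]) \<or> (\<exists>B. s = NT B \<and> gen G B w)) \<alpha> ws \<Longrightarrow>
   gen G A (concat ws)"

thm gen.induct

lemma steps_ctx: "(cfg_step G)\<^sup>*\<^sup>* u v \<Longrightarrow> (cfg_step G)\<^sup>*\<^sup>* (l @ u @ r) (l @ v @ r)"
proof (induction rule: rtranclp_induct)
  case base then show ?case by simp
next
  case (step v w)
  from step.hyps(2) obtain l' A r' \<alpha> where "(A, \<alpha>) \<in> set G" "v = l' @ [NT A] @ r'" "w = l' @ \<alpha> @ r'"
    unfolding cfg_step_def by blast
  then have "cfg_step G (l @ v @ r) (l @ w @ r)" unfolding cfg_step_def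
    by (rule_tac x="l @ l'" in exI, rule_tac x=A in exI, rule_tac x="r' @ r" in exI, auto)
  with step.IH show ?case by simp
qed

lemma list_steps:
  assumes "list_all2 (\<lambda>s w. (cfg_step G)\<^sup>*\<^sup>* [s] (map Tm w)) \<alpha> ws"
  shows "(cfg_step G)\<^sup>*\<^sup>* \<alpha> (map Tm (concat ws))"
  using assms
proof (induction \<alpha> arbitrary: ws)
  case Nil then show ?case by simp
next
  case (Cons s \<alpha>)
  then obtain w ws' where ws: "ws = w # ws'" "(cfg_step G)\<^sup>*\<^sup>* [s] (map Tm w)"
    "list_all2 (\<lambda>s w. (cfg_step G)\<^sup>*\<^sup>* [s] (map Tm w)) \<alpha> ws'"
    by (cases ws) auto
  have "(cfg_step G)\<^sup>*\<^sup>* ([] @ [s] @ \<alpha>) ([] @ map Tm w @ \<alpha>)" by (rule steps_ctx[OF ws(2)])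
  moreover have "(cfg_step G)\<^sup>*\<^sup>* (map Tm w @ \<alpha> @ []) (map Tm w @ map Tm (concat ws') @ [])"
    by (rule steps_ctx, rule Cons.IH[OF ws(3)])
  ultimately show ?case using ws(1) by simp
qed

lemma gen_steps: "gen G A w \<Longrightarrow> (cfg_step G)\<^sup>*\<^sup>* [NT A] (map Tm w)"
proof (induction rule: gen.induct)
  case (1 A \<alpha> ws)
  have "cfg_step G [NT A] \<alpha>" unfolding cfg_step_def
    using 1(1) by (rule_tac x="[]" in exI, rule_tac x=A in exI, rule_tac x="[]" in exI, auto)
  moreover have "list_all2 (\<lambda>s w. (cfg_step G)\<^sup>*\<^sup>* [s] (map Tm w)) \<alpha> ws"
    using 1(2) by (rule list_all2_mono) auto
  ultimately show ?case using list_steps[of G \<alpha> ws] by (meson converse_rtranclp_into_rtranclp)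
qed

definition gsym :: "'a grammar \<Rightarrow> 'a sym \<Rightarrow> 'a list \<Rightarrow> bool" where
  "gsym G s w \<longleftrightarrow> (\<exists>a. s = Tm a \<and> w = [a]) \<or> (\<exists>B. s = NT B \<and> gen G B w)"

lemma steps_gen_aux:
  "(cfg_step G)\<^sup>*\<^sup>* u v \<Longrightarrow> v = map Tm w \<Longrightarrow> \<exists>ws. list_all2 (gsym G) u ws \<and> w = concat ws"
proof (induction arbitrary: w rule: converse_rtranclp_induct)
  case base
  then show ?case
    by (rule_tac x="map (\<lambda>a. [a]) w" in exI) (auto simp: list_all2_map1 list_all2_map2 gsym_def list.rel_refl)
next
  case (step u v)
  from step.hyps(1) obtain l A r \<alpha> where r: "(A, \<alpha>) \<in> set G" "u = l @ [NT A] @ r" "v = l @ \<alpha> @ r"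
    unfolding cfg_step_def by blast
  from step.IH[OF step.prems] obtain ws where ws: "list_all2 (gsym G) v ws" "w = concat ws" by blast
  from ws(1) r(3) obtain ws1 ws2 ws3 where
    s: "ws = ws1 @ ws2 @ ws3" "list_all2 (gsym G) l ws1" "list_all2 (gsym G) \<alpha> ws2" "list_all2 (gsym G) r ws3"
    by (auto simp: list_all2_append1)
  have "gen G A (concat ws2)"
    by (rule gen.intros[OF r(1)]) (use s(3) in \<open>auto simp: gsym_def elim: list_all2_mono\<close>)
  then have "list_all2 (gsym G) u (ws1 @ [concat ws2] @ ws3)"
    using s r(2) by (auto intro!: list_all2_appendI simp: gsym_def)
  then show ?case using s ws(2) by (intro exI[of _ "ws1 @ [concat ws2] @ ws3"]) auto
qed

lemma steps_gen: "(cfg_step G)\<^sup>*\<^sup>* [NT A] (map Tm w) \<Longrightarrow> gen G A w"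
proof -
  assume "(cfg_step G)\<^sup>*\<^sup>* [NT A] (map Tm w)"
  from steps_gen_aux[OF this refl] obtain ws where "list_all2 (gsym G) [NT A] ws" "w = concat ws" by blast
  then show ?thesis by (cases ws) (auto simp: gsym_def)
qed

lemma lang_gen: "cfg_lang G S = {w. gen G S w}"
  unfolding cfg_lang_def using steps_gen gen_steps by blast


lemma gen_intro': "(A, \<alpha>) \<in> set G \<Longrightarrow> list_all2 (gsym G) \<alpha> ws \<Longrightarrow> gen G A (concat ws)"
  by (rule gen.intros) (auto simp: gsym_def elim: list_all2_mono)

definition functional :: "'a grammar \<Rightarrow> bool" where
  "functional G \<longleftrightarrow> (\<forall>A \<alpha> \<beta>. (A, \<alpha>) \<in> set G \<longrightarrow> (A, \<beta>) \<in> set G \<longrightarrow> \<alpha> = \<beta>)"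

lemma list_all2_unique:
  "list_all2 R1 \<alpha> ws \<Longrightarrow> list_all2 R2 \<alpha> ws' \<Longrightarrow> (\<And>s w w'. R1 s w \<Longrightarrow> R2 s w' \<Longrightarrow> w = w') \<Longrightarrow> ws = ws'"
proof (induction \<alpha> arbitrary: ws ws')
  case Nil then show ?case by simp
next
  case (Cons s \<alpha>)
  then show ?case by (cases ws; cases ws') auto
qed

lemma gen_unique: assumes f: "functional G" shows "gen G A w1 \<Longrightarrow> gen G A w2 \<Longrightarrow> w1 = w2"
proof (induction arbitrary: w2 rule: gen.induct)
  case (1 A \<alpha> ws)
  from 1(3) obtain \<beta> ws2 where b: "(A, \<beta>) \<in> set G" "w2 = concat ws2"
    "list_all2 (\<lambda>s w. (\<exists>a. s = Tm a \<and> w = [a]) \<or> (\<exists>B. s = NT B \<and> gen G B w)) \<beta> ws2"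
    by (cases rule: gen.cases) auto
  with 1(1) f have "\<beta> = \<alpha>" unfolding functional_def by blast
  have "ws = ws2"
    by (rule list_all2_unique[OF 1(2) b(3)[unfolded \<open>\<beta> = \<alpha>\<close>]]) auto
  then show ?case using b(2) by simp
qed

lemma gen_mono: "gen G A w \<Longrightarrow> set G \<subseteq> set G' \<Longrightarrow> gen G' A w"
proof (induction rule: gen.induct)
  case (1 A \<alpha> ws)
  show ?case
    by (rule gen.intros) (use 1 in \<open>auto elim: list_all2_mono\<close>)
qed

fun lev :: "'a grammar \<Rightarrow> nat \<Rightarrow> nat set" where
  "lev P 0 = {}"
| "lev P (Suc k) = {A. \<exists>\<alpha>. (A, \<alpha>) \<in> set P \<and> (\<forall>B. NT B \<in> set \<alpha> \<longrightarrow> B \<in> lev P k)}"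

lemma lev_Suc_mono: "lev P k \<subseteq> lev P (Suc k)"
  by (induction k) fastforce+

lemma lev_mono: "k \<le> k' \<Longrightarrow> lev P k \<subseteq> lev P k'"
  by (rule lift_Suc_mono_le[of "lev P", OF lev_Suc_mono])

lemma lev_list: "(\<forall>B. NT B \<in> set \<alpha> \<longrightarrow> (\<exists>k. B \<in> lev P k)) \<Longrightarrow> \<exists>k. \<forall>B. NT B \<in> set \<alpha> \<longrightarrow> B \<in> lev P k"
proof (induction \<alpha>)
  case Nil then show ?case by simp
next
  case (Cons s \<alpha>)
  then obtain k where k: "\<forall>B. NT B \<in> set \<alpha> \<longrightarrow> B \<in> lev P k" by auto
  show ?case
  proof (cases s)
    case (NT C)
    with Cons.prems obtain k' where "C \<in> lev P k'" by auto
    then show ?thesis using k NT lev_mono[of k "max k k'" P] lev_mono[of k' "max k k'" P]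
      by (rule_tac x="max k k'" in exI) auto
  next
    case (Tm a)
    then show ?thesis using k by auto
  qed
qed

definition prodc :: "'a grammar \<Rightarrow> nat \<Rightarrow> bool" where
  "prodc P A \<longleftrightarrow> (\<exists>k. A \<in> lev P k)"
definition hh :: "'a grammar \<Rightarrow> nat \<Rightarrow> nat" where
  "hh P A = (LEAST k. A \<in> lev P k)"
definition rhs :: "'a grammar \<Rightarrow> nat \<Rightarrow> 'a sym list" where
  "rhs P A = (SOME \<alpha>. (A, \<alpha>) \<in> set P \<and> (\<forall>B. NT B \<in> set \<alpha> \<longrightarrow> B \<in> lev P (hh P A - 1)))"

lemma rhs_props:
  assumes "prodc P A"
  shows "(A, rhs P A) \<in> set P" "\<And>B. NT B \<in> set (rhs P A) \<Longrightarrow> prodc P B \<and> hh P B < hh P A"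
proof -
  have A: "A \<in> lev P (hh P A)" using assms unfolding prodc_def hh_def by (metis LeastI)
  then obtain m where m: "hh P A = Suc m" by (cases "hh P A") auto
  with A have ex: "\<exists>\<alpha>. (A, \<alpha>) \<in> set P \<and> (\<forall>B. NT B \<in> set \<alpha> \<longrightarrow> B \<in> lev P (hh P A - 1))" by auto
  have r: "(A, rhs P A) \<in> set P \<and> (\<forall>B. NT B \<in> set (rhs P A) \<longrightarrow> B \<in> lev P (hh P A - 1))"
    unfolding rhs_def by (rule someI_ex[OF ex])
  then show "(A, rhs P A) \<in> set P" by simp
  fix B assume "NT B \<in> set (rhs P A)"
  with r m have "B \<in> lev P m" by simp
  then show "prodc P B \<and> hh P B < hh P A" unfolding prodc_def hh_def using m
    by (metis Least_le hh_def le_imp_less_Suc)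
qed

lemma gen_prodc: "gen P A w \<Longrightarrow> prodc P A"
proof (induction rule: gen.induct)
  case (1 A \<alpha> ws)
  have "\<forall>B. NT B \<in> set \<alpha> \<longrightarrow> (\<exists>k. B \<in> lev P k)"
  proof (intro allI impI)
    fix B assume "NT B \<in> set \<alpha>"
    then obtain i where "i < length \<alpha>" "\<alpha> ! i = NT B" by (metis in_set_conv_nth)
    moreover from 1(2) \<open>i < length \<alpha>\<close> have
      "(\<exists>a. \<alpha> ! i = Tm a \<and> ws ! i = [a]) \<or> (\<exists>B. \<alpha> ! i = NT B \<and> gen P B (ws ! i) \<and> prodc P B)"
      by (auto simp: list_all2_conv_all_nth)
    ultimately show "\<exists>k. B \<in> lev P k" unfolding prodc_def by auto
  qed
  from lev_list[OF this] obtain k where "\<forall>B. NT B \<in> set \<alpha> \<longrightarrow> B \<in> lev P k" by blast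
  then have "A \<in> lev P (Suc k)" using 1(1) by auto
  then show ?case unfolding prodc_def by blast
qed

definition LL :: "'a grammar \<Rightarrow> nat list" where
  "LL P = filter (prodc P) (remdups (map fst P))"
definition QQ :: "'a grammar \<Rightarrow> 'a grammar" where
  "QQ P = map (\<lambda>A. (A, rhs P A)) (LL P)"

lemma prodc_LL: "prodc P A \<Longrightarrow> A \<in> set (LL P)"
  using rhs_props(1)[of P A] unfolding LL_def by force

lemma QQ_sub: "set (QQ P) \<subseteq> set P"
  unfolding QQ_def LL_def using rhs_props(1) by auto

lemma QQ_mem: "(A, \<alpha>) \<in> set (QQ P) \<Longrightarrow> \<alpha> = rhs P A \<and> prodc P A"
  unfolding QQ_def LL_def by auto

lemma list_all2_ex: "(\<And>s. s \<in> set \<alpha> \<Longrightarrow> \<exists>w. R s w) \<Longrightarrow> \<exists>ws. list_all2 R \<alpha> ws"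
proof (induction \<alpha>)
  case Nil then show ?case by simp
next
  case (Cons s \<alpha>)
  then obtain w ws where "R s w" "list_all2 R \<alpha> ws" by force
  then show ?case by (rule_tac x="w # ws" in exI) auto
qed

lemma QQ_exists: "prodc P A \<Longrightarrow> \<exists>w. gen (QQ P) A w"
proof (induction "hh P A" arbitrary: A rule: less_induct)
  case less
  have "\<exists>ws. list_all2 (gsym (QQ P)) (rhs P A) ws"
  proof (rule list_all2_ex)
    fix s assume s: "s \<in> set (rhs P A)"
    show "\<exists>w. gsym (QQ P) s w"
    proof (cases s)
      case (NT B)
      with s rhs_props(2)[OF less.prems] have "prodc P B" "hh P B < hh P A" by auto
      with less.hyps show ?thesis using NT by (auto simp: gsym_def)
    qed (auto simp: gsym_def)
  qed
  moreover have "(A, rhs P A) \<in> set (QQ P)" using prodc_LL[OF less.prems] unfolding QQ_def by auto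
  ultimately show ?case using gen_intro' by blast
qed


definition ren :: "'a sym list \<Rightarrow> 'a sym list" where
  "ren \<alpha> = map (\<lambda>s. case s of NT B \<Rightarrow> NT (2 * B) | Tm a \<Rightarrow> Tm a) \<alpha>"

definition UU :: "'a grammar \<Rightarrow> nat \<Rightarrow> 'a grammar" where
  "UU P S = map (\<lambda>A. (2 * A, ren (rhs P A))) (filter (\<lambda>A. hh P A < hh P S) (LL P))"

lemma ren_comp:
  assumes "list_all2 (\<lambda>s w. (\<exists>a. s = Tm a \<and> w = [a]) \<or> (\<exists>B. s = NT B \<and> gen G B w \<and> X B w)) \<beta> ws"
    and "\<And>B w. NT B \<in> set \<beta> \<Longrightarrow> gen G B w \<Longrightarrow> X B w \<Longrightarrow> gen G' (2 * B) w"
  shows "list_all2 (gsym G') (ren \<beta>) ws"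
  using assms
proof (induction \<beta> arbitrary: ws)
  case Nil then show ?case by (simp add: ren_def)
next
  case (Cons s \<beta>)
  then obtain w ws' where ws: "ws = w # ws'" by (cases ws) auto
  with Cons.prems have h: "(\<exists>a. s = Tm a \<and> w = [a]) \<or> (\<exists>B. s = NT B \<and> gen G B w \<and> X B w)" by auto
  have "list_all2 (gsym G') (ren \<beta>) ws'" using Cons ws by auto
  moreover have "gsym G' (case s of NT B \<Rightarrow> NT (2 * B) | Tm a \<Rightarrow> Tm a) w"
    using h Cons.prems(2) by (auto simp: gsym_def)
  ultimately show ?case using ws by (simp add: ren_def)
qed

lemma gen_U: "gen (QQ P) B w \<Longrightarrow> hh P B < hh P S \<Longrightarrow> gen (UU P S) (2 * B) w"
proof (induction rule: gen.induct)
  case (1 A \<alpha> ws)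
  from QQ_mem[OF 1(1)] have a: "\<alpha> = rhs P A" "prodc P A" by auto
  have "(2 * A, ren \<alpha>) \<in> set (UU P S)" using a prodc_LL[OF a(2)] 1(3) unfolding UU_def by auto
  moreover have "list_all2 (gsym (UU P S)) (ren \<alpha>) ws"
  proof (rule ren_comp[OF 1(2)])
    fix B w assume "NT B \<in> set \<alpha>" "gen (QQ P) B w" "hh P B < hh P S \<longrightarrow> gen (UU P S) (2 * B) w"
    with rhs_props(2)[OF a(2)] a(1) 1(3) show "gen (UU P S) (2 * B) w" by force
  qed
  ultimately show ?case by (rule gen_intro')
qed

lemma split_concat:
  "concat ws = x @ [a] @ y \<Longrightarrow>
   \<exists>ws1 u v ws2. ws = ws1 @ [u @ [a] @ v] @ ws2 \<and> x = concat ws1 @ u \<and> y = v @ concat ws2"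
proof (induction ws arbitrary: x)
  case Nil then show ?case by simp
next
  case (Cons w ws)
  then have e: "w @ concat ws = x @ [a] @ y" by simp
  show ?case
  proof (cases "length x < length w")
    case True
    then have c: "take (length x) w = x \<and> drop (length x) w @ concat ws = a # y"
      using e by (simp add: append_eq_append_conv_if)
    define d where "d = drop (length x) w"
    have dne: "d \<noteq> []" using True by (simp add: d_def)
    have wd: "w = x @ d" using c d_def by (metis append_take_drop_id)
    obtain c0 d' where d': "d = c0 # d'" using dne by (cases d) auto
    have "c0 = a" "y = d' @ concat ws" using c d' d_def by auto
    then show ?thesis using wd d'
      by (rule_tac x="[]" in exI, rule_tac x=x in exI, rule_tac x="d'" in exI,
          rule_tac x=ws in exI) simp
  next
    case False
    then have c: "w = take (length w) x \<and> concat ws = drop (length w) x @ [a] @ y"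
      using e by (simp add: append_eq_append_conv_if)
    define x' where "x' = drop (length w) x"
    have x: "x = w @ x'" using c x'_def by (metis append_take_drop_id)
    have "concat ws = x' @ [a] @ y" using c x'_def by simp
    from Cons.IH[OF this] obtain ws1 u v ws2 where
      "ws = ws1 @ [u @ [a] @ v] @ ws2" "x' = concat ws1 @ u" "y = v @ concat ws2" by blast
    then show ?thesis using x
      by (rule_tac x="w # ws1" in exI, rule_tac x=u in exI, rule_tac x=v in exI, rule_tac x=ws2 in exI) simp
  qed
qed

lemma gsize_Nil[simp]: "gsize [] = 0"
  by (simp add: gsize_def)
lemma gsize_Cons[simp]: "gsize (p # G) = length (snd p) + gsize G"
  by (simp add: gsize_def)
lemma gsize_append[simp]: "gsize (G @ H) = gsize G + gsize H"
  by (simp add: gsize_def)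

definition goodM :: "'a grammar \<Rightarrow> nat \<Rightarrow> 'a list \<Rightarrow> nat \<Rightarrow> 'a list \<Rightarrow> bool" where
  "goodM P S r A z \<longleftrightarrow> (\<exists>M D. gen (UU P S @ M) (2 * A + 1) z \<and> functional M \<and>
     fst ` set M = (\<lambda>B. 2 * B + 1) ` D \<and> D \<subseteq> {B. B \<in> set (LL P) \<and> hh P B \<le> hh P A} \<and> A \<in> D \<and>
     gsize M + 1 \<le> (\<Sum>B\<in>D. length (rhs P B)) + length r)"

lemma la2_split:
  assumes "list_all2 R \<alpha> (ws1 @ [w] @ ws2)"
  obtains \<alpha>1 s \<alpha>2 where "\<alpha> = \<alpha>1 @ [s] @ \<alpha>2" "list_all2 R \<alpha>1 ws1" "R s w" "list_all2 R \<alpha>2 ws2"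
  using assms by (auto simp: list_all2_append2 list_all2_Cons2)

lemma marked:
  "gen (QQ P) A w \<Longrightarrow> w = x @ [a] @ y \<Longrightarrow> hh P A \<le> hh P S \<Longrightarrow> goodM P S r A (x @ r @ y)"
proof (induction arbitrary: x y rule: gen.induct)
  case (1 A \<alpha> ws)
  let ?R = "\<lambda>s w. (\<exists>a. s = Tm a \<and> w = [a]) \<or> (\<exists>B. s = NT B \<and> gen (QQ P) B w \<and>
        (\<forall>x y. w = x @ [a] @ y \<longrightarrow> hh P B \<le> hh P S \<longrightarrow> goodM P S r B (x @ r @ y)))"
  from QQ_mem[OF 1(1)] have a: "\<alpha> = rhs P A" "prodc P A" by auto
  have AL: "A \<in> set (LL P)" by (rule prodc_LL[OF a(2)])
  from split_concat[OF 1(3)] obtain ws1 u v ws2 where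
    sp: "ws = ws1 @ [u @ [a] @ v] @ ws2" "x = concat ws1 @ u" "y = v @ concat ws2" by blast
  have l2: "list_all2 ?R \<alpha> (ws1 @ [u @ [a] @ v] @ ws2)" using 1(2) sp(1) by simp
  obtain \<alpha>1 s \<alpha>2 where al: "\<alpha> = \<alpha>1 @ [s] @ \<alpha>2" "list_all2 ?R \<alpha>1 ws1" "?R s (u @ [a] @ v)" "list_all2 ?R \<alpha>2 ws2"
    by (rule la2_split[OF l2])
  have lowU: "gen (UU P S) (2 * B) w" if "NT B \<in> set \<alpha>" "gen (QQ P) B w" for B w
  proof -
    have "hh P B < hh P A" using rhs_props(2)[OF a(2)] that(1) a(1) by blast
    then show ?thesis using gen_U[OF that(2)] 1(4) by simp
  qed
  have len: "length \<alpha> = length \<alpha>1 + length \<alpha>2 + 1" unfolding al(1) by simp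
  show ?case
  proof (cases "\<exists>a'. s = Tm a' \<and> u @ [a] @ v = [a']")
    case True
    then have uv: "u = []" "v = []" by (cases u; auto)+
    define M where "M = [(2 * A + 1, ren \<alpha>1 @ map Tm r @ ren \<alpha>2)]"
    have "gen (UU P S @ M) (2 * A + 1) (concat (ws1 @ map (\<lambda>c. [c]) r @ ws2))"
    proof (rule gen_intro')
      show "(2 * A + 1, ren \<alpha>1 @ map Tm r @ ren \<alpha>2) \<in> set (UU P S @ M)" by (simp add: M_def)
      have c1: "list_all2 (gsym (UU P S @ M)) (ren \<alpha>1) ws1"
        by (rule ren_comp[OF al(2)]) (rule gen_mono[OF lowU], auto simp: al(1))
      have c2: "list_all2 (gsym (UU P S @ M)) (ren \<alpha>2) ws2"
        by (rule ren_comp[OF al(4)]) (rule gen_mono[OF lowU], auto simp: al(1))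
      have c3: "list_all2 (gsym (UU P S @ M)) (map Tm r) (map (\<lambda>c. [c]) r)"
        by (auto simp: list_all2_map1 list_all2_map2 gsym_def list.rel_refl)
      show "list_all2 (gsym (UU P S @ M)) (ren \<alpha>1 @ map Tm r @ ren \<alpha>2) (ws1 @ map (\<lambda>c. [c]) r @ ws2)"
        using c1 c2 c3 by (intro list_all2_appendI)
    qed
    moreover have "concat (ws1 @ map (\<lambda>c. [c]) r @ ws2) = x @ r @ y"
      using sp uv by (simp add: concat_map_singleton)
    ultimately have g: "gen (UU P S @ M) (2 * A + 1) (x @ r @ y)" by simp
    have "functional M" by (simp add: M_def functional_def)
    moreover have "fst ` set M = (\<lambda>B. 2 * B + 1) ` {A}" by (simp add: M_def)
    moreover have "{A} \<subseteq> {B. B \<in> set (LL P) \<and> hh P B \<le> hh P A}" using AL by simp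
    moreover have "gsize M + 1 \<le> (\<Sum>B\<in>{A}. length (rhs P B)) + length r"
      using len a(1) by (simp add: M_def ren_def)
    ultimately show ?thesis using g unfolding goodM_def by blast
  next
    case False
    with al(3) obtain B where B: "s = NT B" "gen (QQ P) B (u @ [a] @ v)"
      "hh P B \<le> hh P S \<longrightarrow> goodM P S r B (u @ r @ v)" by blast
    have "NT B \<in> set \<alpha>" unfolding al(1) B(1) by simp
    then have hB: "hh P B < hh P A" using rhs_props(2)[OF a(2)] a(1) by blast
    with 1(4) B(3) have "goodM P S r B (u @ r @ v)" by simp
    then obtain M D where MD: "gen (UU P S @ M) (2 * B + 1) (u @ r @ v)" "functional M"
      "fst ` set M = (\<lambda>B. 2 * B + 1) ` D" "D \<subseteq> {Ba. Ba \<in> set (LL P) \<and> hh P Ba \<le> hh P B}" "B \<in> D"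
      "gsize M + 1 \<le> (\<Sum>B\<in>D. length (rhs P B)) + length r" unfolding goodM_def by blast
    have AD: "A \<notin> D" using MD(4) hB by auto
    have "D \<subseteq> set (LL P)" using MD(4) by auto
    then have finD: "finite D" using finite_subset by blast
    define M' where "M' = (2 * A + 1, ren \<alpha>1 @ [NT (2 * B + 1)] @ ren \<alpha>2) # M"
    have sub: "set (UU P S @ M) \<subseteq> set (UU P S @ M')" by (auto simp: M'_def)
    have "gen (UU P S @ M') (2 * A + 1) (concat (ws1 @ [u @ r @ v] @ ws2))"
    proof (rule gen_intro')
      show "(2 * A + 1, ren \<alpha>1 @ [NT (2 * B + 1)] @ ren \<alpha>2) \<in> set (UU P S @ M')" by (simp add: M'_def)
      have c1: "list_all2 (gsym (UU P S @ M')) (ren \<alpha>1) ws1"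
        by (rule ren_comp[OF al(2)]) (rule gen_mono[OF lowU], auto simp: al(1) M'_def)
      have c2: "list_all2 (gsym (UU P S @ M')) (ren \<alpha>2) ws2"
        by (rule ren_comp[OF al(4)]) (rule gen_mono[OF lowU], auto simp: al(1) M'_def)
      have c3: "list_all2 (gsym (UU P S @ M')) [NT (2 * B + 1)] [u @ r @ v]"
        using gen_mono[OF MD(1) sub] by (auto simp: gsym_def)
      show "list_all2 (gsym (UU P S @ M')) (ren \<alpha>1 @ [NT (2 * B + 1)] @ ren \<alpha>2) (ws1 @ [u @ r @ v] @ ws2)"
        using c1 c2 c3 by (intro list_all2_appendI)
    qed
    moreover have "concat (ws1 @ [u @ r @ v] @ ws2) = x @ r @ y" using sp by simp
    ultimately have g: "gen (UU P S @ M') (2 * A + 1) (x @ r @ y)" by simp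
    have "functional M'"
    proof -
      have nf: "2 * A + 1 \<notin> fst ` set M" using MD(3) AD by auto
      show ?thesis unfolding functional_def
      proof (intro allI impI)
        fix A0 \<beta> \<gamma> assume b: "(A0, \<beta>) \<in> set M'" and c: "(A0, \<gamma>) \<in> set M'"
        show "\<beta> = \<gamma>"
        proof (cases "A0 = 2 * A + 1")
          case True
          then have "(A0, \<beta>) \<notin> set M" "(A0, \<gamma>) \<notin> set M" using nf by force+
          then show ?thesis using b c by (simp add: M'_def)
        next
          case False
          then have "(A0, \<beta>) \<in> set M" "(A0, \<gamma>) \<in> set M" using b c by (auto simp: M'_def)
          then show ?thesis using MD(2) unfolding functional_def by blast
        qed
      qed
    qed
    moreover have "fst ` set M' = (\<lambda>B. 2 * B + 1) ` insert A D" using MD(3) by (auto simp: M'_def)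
    moreover have "insert A D \<subseteq> {Ba. Ba \<in> set (LL P) \<and> hh P Ba \<le> hh P A}" using MD(4) hB AL by auto
    moreover have "gsize M' + 1 \<le> (\<Sum>B\<in>insert A D. length (rhs P B)) + length r"
      using MD(6) AD finD a(1) len by (simp add: M'_def ren_def)
    ultimately show ?thesis using g unfolding goodM_def by blast
  qed
qed


lemma ed0: "ed xs ys = 0 \<Longrightarrow> xs = ys"
  by (induction xs ys rule: ed.induct) (auto split: if_splits simp: min_def)

lemma ed1: "ed xs ys = 1 \<Longrightarrow> (\<exists>x y b. xs = x @ y \<and> ys = x @ [b] @ y) \<or>
   (\<exists>x a y r. xs = x @ [a] @ y \<and> ys = x @ r @ y \<and> length r \<le> 1)"
proof (induction xs ys rule: ed.induct)
  case (1 ys)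
  then obtain b where "ys = [b]" by (cases ys) auto
  then show ?case by (intro disjI1 exI[of _ "[]"] exI[of _ b]) simp
next
  case (2 v va)
  then have "va = []" by simp
  then show ?case by (intro disjI2 exI[of _ "[]"] exI[of _ v] exI[of _ "[]"] exI[of _ "[]"]) simp
next
  case (3 x xs y ys)
  let ?a = "ed xs (y # ys) + 1" and ?b = "ed (x # xs) ys + 1" and ?c = "ed xs ys + (if x = y then 0 else 1)"
  have "min (min ?a ?b) ?c = 1" using 3(4) by simp
  then have "?a = 1 \<or> ?b = 1 \<or> ?c = 1" by (simp add: min_def split: if_splits)
  then consider "ed xs (y # ys) = 0" | "ed (x # xs) ys = 0" | "x = y" "ed xs ys = 1" | "x \<noteq> y" "ed xs ys = 0"
    by (auto split: if_splits)
  then show ?case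
  proof cases
    case 1
    then have "xs = y # ys" by (rule ed0)
    then show ?thesis by (intro disjI2 exI[of _ "[]"] exI[of _ x] exI[of _ xs] exI[of _ "[]"]) simp
  next
    case 2
    then have "x # xs = ys" by (rule ed0)
    then show ?thesis by (intro disjI1 exI[of _ "[]"] exI[of _ "x # xs"] exI[of _ y]) simp
  next
    case 3
    from 3(2) have "(\<exists>x y b. xs = x @ y \<and> ys = x @ [b] @ y) \<or>
      (\<exists>x a y r. xs = x @ [a] @ y \<and> ys = x @ r @ y \<and> length r \<le> 1)" using "3.IH"(3)[OF 3(2)] by simp
    then show ?thesis
    proof
      assume "\<exists>x y b. xs = x @ y \<and> ys = x @ [b] @ y"
      then obtain x' y' b where "xs = x' @ y'" "ys = x' @ [b] @ y'" by blast
      then show ?thesis using 3(1) by (intro disjI1 exI[of _ "x # x'"] exI[of _ y'] exI[of _ b]) simp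
    next
      assume "\<exists>x a y r. xs = x @ [a] @ y \<and> ys = x @ r @ y \<and> length r \<le> 1"
      then obtain x' a y' r where "xs = x' @ [a] @ y'" "ys = x' @ r @ y'" "length r \<le> 1" by blast
      then show ?thesis using 3(1) by (intro disjI2 exI[of _ "x # x'"] exI[of _ a] exI[of _ y'] exI[of _ r]) simp
    qed
  next
    case 4
    then have "xs = ys" by (simp add: ed0)
    then show ?thesis by (intro disjI2 exI[of _ "[]"] exI[of _ x] exI[of _ xs] exI[of _ "[y]"]) simp
  qed
qed

lemma edit_form: "ed T T' = 1 \<Longrightarrow> T \<noteq> [] \<Longrightarrow> \<exists>x a y r. T = x @ [a] @ y \<and> T' = x @ r @ y \<and> length r \<le> 2"
proof -
  assume e: "ed T T' = 1" and ne: "T \<noteq> []"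
  from ed1[OF e] show ?thesis
  proof
    assume "\<exists>x y b. T = x @ y \<and> T' = x @ [b] @ y"
    then obtain x y b where xy: "T = x @ y" "T' = x @ [b] @ y" by blast
    show ?thesis
    proof (cases "x = []")
      case True
      with xy ne obtain c y' where "y = c # y'" by (cases y) auto
      then show ?thesis using xy True
        by (intro exI[of _ "[]"] exI[of _ c] exI[of _ y'] exI[of _ "[b, c]"]) simp
    next
      case False
      then have xb: "x = butlast x @ [last x]" by simp
      have "T = butlast x @ [last x] @ y" using xy(1) xb by (metis append.assoc)
      moreover have "T' = butlast x @ [last x, b] @ y" using xy(2) xb by (metis append.assoc append_Cons append_Nil)
      ultimately show ?thesis
        by (intro exI[of _ "butlast x"] exI[of _ "last x"] exI[of _ y] exI[of _ "[last x, b]"]) simp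
    qed
  next
    assume "\<exists>x a y r. T = x @ [a] @ y \<and> T' = x @ r @ y \<and> length r \<le> 1"
    then obtain x a y r where "T = x @ [a] @ y" "T' = x @ r @ y" "length r \<le> 1" by blast
    then show ?thesis by (intro exI[of _ x] exI[of _ a] exI[of _ y] exI[of _ r]) simp
  qed
qed

lemma gstar_ex: "\<exists>P S. is_grammar_compression P S T \<and> gsize P = gstar T"
proof -
  let ?G = "[(0::nat, map Tm T)]"
  have f: "functional ?G" by (simp add: functional_def)
  have g: "gen ?G 0 T"
  proof -
    have "gen ?G 0 (concat (map (\<lambda>c. [c]) T))"
      by (rule gen_intro') (auto simp: list_all2_map1 list_all2_map2 gsym_def list.rel_refl)
    then show ?thesis by (simp add: concat_map_singleton)
  qed
  have "is_grammar_compression ?G 0 T"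
    unfolding is_grammar_compression_def lang_gen using gen_unique[OF f g] g by auto
  then have "\<exists>k P S. is_grammar_compression P S T \<and> gsize P = k" by blast
  then show ?thesis unfolding gstar_def by (rule LeastI_ex)
qed

lemma gstar_le: "is_grammar_compression P S T \<Longrightarrow> gstar T \<le> gsize P"
  unfolding gstar_def by (rule Least_le) blast

lemma sum_set_le_list: "sum (f :: _ \<Rightarrow> nat) (set xs) \<le> sum_list (map f xs)"
proof (induction xs)
  case Nil then show ?case by simp
next
  case (Cons x xs)
  have "sum f (set (x # xs)) \<le> f x + sum f (set xs)"
    by (simp add: sum.insert_if)
  then show ?case using Cons by simp
qed

lemma bound: assumes e: "ed T T' = 1" and ne: "T \<noteq> []" shows "gstar T' \<le> 2 * gstar T"
proof -
  obtain P S where PS: "is_grammar_compression P S T" "gsize P = gstar T" using gstar_ex by blast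
  have lang: "\<And>w. gen P S w \<longleftrightarrow> w = T" using PS(1) unfolding is_grammar_compression_def lang_gen by auto
  have pS: "prodc P S" using gen_prodc lang by blast
  obtain w0 where "gen (QQ P) S w0" using QQ_exists[OF pS] by blast
  moreover have "w0 = T" using gen_mono[OF calculation QQ_sub] lang by blast
  ultimately have gQ: "gen (QQ P) S T" by simp
  obtain x a y r where xr: "T = x @ [a] @ y" "T' = x @ r @ y" "length r \<le> 2" using edit_form[OF e ne] by blast
  have "goodM P S r S (x @ r @ y)" by (rule marked[OF gQ xr(1)]) simp
  then obtain M D where MD: "gen (UU P S @ M) (2 * S + 1) T'" "functional M"
      "fst ` set M = (\<lambda>B. 2 * B + 1) ` D" "D \<subseteq> {B. B \<in> set (LL P) \<and> hh P B \<le> hh P S}" "S \<in> D"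
      "gsize M + 1 \<le> (\<Sum>B\<in>D. length (rhs P B)) + length r" unfolding goodM_def xr(2) by blast
  define G' where "G' = UU P S @ M"
  have fG: "functional G'"
    unfolding functional_def
  proof (intro allI impI)
    fix A0 \<beta> \<gamma> assume b: "(A0, \<beta>) \<in> set G'" and c: "(A0, \<gamma>) \<in> set G'"
    show "\<beta> = \<gamma>"
    proof (cases "even A0")
      case True
      have "A0 \<notin> fst ` set M" using MD(3) True by auto
      then have "(A0, \<beta>) \<notin> set M" "(A0, \<gamma>) \<notin> set M" by force+
      then have "(A0, \<beta>) \<in> set (UU P S)" "(A0, \<gamma>) \<in> set (UU P S)" using b c by (auto simp: G'_def)
      then show ?thesis by (auto simp: UU_def)
    next
      case False
      have "(A0, \<beta>) \<notin> set (UU P S)" "(A0, \<gamma>) \<notin> set (UU P S)" using False by (auto simp: UU_def)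
      then have "(A0, \<beta>) \<in> set M" "(A0, \<gamma>) \<in> set M" using b c by (auto simp: G'_def)
      then show ?thesis using MD(2) unfolding functional_def by blast
    qed
  qed
  have "is_grammar_compression G' (2 * S + 1) T'"
    unfolding is_grammar_compression_def lang_gen using gen_unique[OF fG] MD(1) unfolding G'_def by auto
  then have g1: "gstar T' \<le> gsize G'" by (rule gstar_le)
  define F where "F = set (LL P)"
  define f where "f = (\<lambda>A. length (rhs P A))"
  have finF: "finite F" by (simp add: F_def)
  have SF: "S \<in> F" using prodc_LL[OF pS] by (simp add: F_def)
  have dL: "distinct (LL P)" by (simp add: LL_def)
  have "gsize (UU P S) = sum_list (map f (filter (\<lambda>A. hh P A < hh P S) (LL P)))"
    by (simp add: UU_def gsize_def f_def ren_def comp_def)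
  also have "\<dots> = sum f (set (filter (\<lambda>A. hh P A < hh P S) (LL P)))"
    by (rule sum_list_distinct_conv_sum_set) (simp add: dL)
  also have "\<dots> \<le> sum f (F - {S})"
    by (rule sum_mono2) (auto simp: F_def finF)
  finally have u1: "gsize (UU P S) \<le> sum f (F - {S})" .
  have u2: "sum f F = f S + sum f (F - {S})" using sum.remove[OF finF SF] by simp
  have d1: "sum f D \<le> sum f F" by (rule sum_mono2[OF finF]) (use MD(4) in \<open>auto simp: F_def\<close>)
  have "sum f F = sum (\<lambda>p. length (snd p)) ((\<lambda>A. (A, rhs P A)) ` F)"
    by (subst sum.reindex) (auto simp: inj_on_def f_def)
  also have "\<dots> \<le> sum (\<lambda>p. length (snd p)) (set P)"
  proof (rule sum_mono2)
    show "(\<lambda>A. (A, rhs P A)) ` F \<subseteq> set P" using rhs_props(1) by (auto simp: F_def LL_def)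
  qed auto
  also have "\<dots> \<le> gsize P" unfolding gsize_def by (rule sum_set_le_list)
  finally have p1: "sum f F \<le> gsize P" .
  have fS: "f S \<ge> 1"
  proof (rule ccontr)
    assume "\<not> 1 \<le> f S"
    then have rS: "rhs P S = []" by (cases "rhs P S") (auto simp: f_def)
    from gQ show False
    proof (cases rule: gen.cases)
      case (1 \<alpha> ws)
      then have "\<alpha> = []" using QQ_mem rS by blast
      with 1 have "ws = []" by simp
      with 1 ne show False by simp
    qed
  qed
  have "gsize G' = gsize (UU P S) + gsize M" by (simp add: G'_def)
  then have "gsize G' \<le> 2 * gsize P" using u1 u2 d1 p1 fS MD(6) xr(3) unfolding f_def by linarith
  then show ?thesis using g1 PS(2) by simp
qed

theorem mainTheorem18:
  fixes n :: nat and T T' :: "'a list"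
  assumes "n \<ge> 1" and "length T = n" and "ed T T' = 1"
  shows "(length T' = n \<longrightarrow> gstar T' \<le> 2 * gstar T \<and> int (gstar T') - int (gstar T) \<le> int (gstar T))
       \<and> (length T' = n + 1 \<longrightarrow> gstar T' \<le> 2 * gstar T \<and> int (gstar T') - int (gstar T) \<le> int (gstar T))
       \<and> (length T' = n - 1 \<longrightarrow> gstar T' \<le> 2 * gstar T \<and> int (gstar T') - int (gstar T) \<le> int (gstar T))"
proof -
  have "T \<noteq> []" using assms(1,2) by auto
  from bound[OF assms(3) this] have "gstar T' \<le> 2 * gstar T" .
  then have "int (gstar T') - int (gstar T) \<le> int (gstar T)" by linarith
  with \<open>gstar T' \<le> 2 * gstar T\<close> show ?thesis by blast
qed

end
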